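(* Let $1\le p\le2$, let $X$ be a Banach space with $\dim X\ge2$, and let $F=(f_i)_{i\in\mathbb{Z}}\in\ell_p(\mathbb{Z},X)$. Then the closed linear span of $\{F^{(n)}:n\in\mathbb{Z}\}$ is not equal to $\ell_p(\mathbb{Z},X)$.
   Context: $\ell_p(\mathbb{Z},X)$ is the space of sequences $(f_n)_{n\in\mathbb{Z}}$ in $X$ with norm $(\sum_n\|f_n\|^p)^{1/p}<\infty$. For $F=(f_n)_{n\in\mathbb{Z}}$ and $k\in\mathbb{Z}$, $F^{(k)}=(f_{n-k})_{n\in\mathbb{Z}}$. *)

theory Defs
  imports "HOL-Analysis.Analysis"
begin

definition lp_space :: "real \<Rightarrow> (int \<Rightarrow> 'a::real_normed_vector) set" where
  "lp_space p = {f. (\<lambda>n. norm (f n) powr p) summable_on UNIV}"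

definition lp_norm :: "real \<Rightarrow> (int \<Rightarrow> 'a::real_normed_vector) \<Rightarrow> real" where
  "lp_norm p f = (\<Sum>\<^sub>\<infinity>n. norm (f n) powr p) powr (1 / p)"

definition shift_seq :: "int \<Rightarrow> (int \<Rightarrow> 'a) \<Rightarrow> (int \<Rightarrow> 'a)" where
  "shift_seq k F = (\<lambda>n. F (n - k))"

definition translate_span :: "(int \<Rightarrow> 'a::real_vector) \<Rightarrow> (int \<Rightarrow> 'a) set" where
  "translate_span F = {(\<lambda>n. \<Sum>k\<in>S. c k *\<^sub>R shift_seq k F n) | S c. finite S}"

definition closed_translate_span :: "real \<Rightarrow> (int \<Rightarrow> 'a::real_normed_vector) \<Rightarrow> (int \<Rightarrow> 'a) set" where
  "closed_translate_span p F = {G \<in> lp_space p. \<forall>e>0. \<exists>H\<in>translate_span F.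
      lp_norm p (\<lambda>n. G n - H n) < e}"

end

theory Submission
  imports Defs
begin


definition goodR :: "('a::real_normed_vector \<times> real) set \<Rightarrow> bool" where
  "goodR R \<longleftrightarrow> (\<forall>x a b. (x,a)\<in>R \<longrightarrow> (x,b)\<in>R \<longrightarrow> a=b)
     \<and> (\<forall>x a y b. (x,a)\<in>R \<longrightarrow> (y,b)\<in>R \<longrightarrow> (x+y,a+b)\<in>R)
     \<and> (\<forall>x a c. (x,a)\<in>R \<longrightarrow> (c *\<^sub>R x, c*a)\<in>R)
     \<and> (\<forall>x a. (x,a)\<in>R \<longrightarrow> a \<le> norm x)"

lemma goodR_ext:
  fixes R :: "('a::real_normed_vector \<times> real) set"
  assumes g: "goodR R" and ne: "R \<noteq> {}" and y: "y \<notin> fst ` R"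
  shows "\<exists>R'. goodR R' \<and> R \<subset> R'"
proof -
  have fnc: "\<And>x a b. (x,a)\<in>R \<Longrightarrow> (x,b)\<in>R \<Longrightarrow> a=b"
   and add: "\<And>x a z b. (x,a)\<in>R \<Longrightarrow> (z,b)\<in>R \<Longrightarrow> (x+z,a+b)\<in>R"
   and sc: "\<And>x a c. (x,a)\<in>R \<Longrightarrow> (c *\<^sub>R x, c*a)\<in>R"
   and bd: "\<And>x a. (x,a)\<in>R \<Longrightarrow> a \<le> norm x"
    using g unfolding goodR_def by blast+
  obtain x0 a0 where x0: "(x0,a0) \<in> R" using ne by auto
  have z: "(0,0) \<in> R" using sc[OF x0, of 0] by simp
  define V where "V = {a - norm (x - y) | x a. (x,a) \<in> R}"
  have key: "a - norm (x - y) \<le> norm (z + y) - b" if "(x,a)\<in>R" "(z,b)\<in>R" for x a z b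
  proof -
    have "a + b \<le> norm (x + z)" using bd[OF add[OF that]] .
    also have "x + z = (x - y) + (z + y)" by simp
    also have "norm \<dots> \<le> norm (x - y) + norm (z + y)" by (rule norm_triangle_ineq)
    finally show ?thesis by simp
  qed
  have Vne: "V \<noteq> {}" using z unfolding V_def by blast
  have Vbd: "\<And>v. v \<in> V \<Longrightarrow> v \<le> norm (z + y) - b" if "(z,b)\<in>R" for z b
    using key that unfolding V_def by blast
  define c where "c = Sup V"
  have c_ge: "a - norm (x - y) \<le> c" if "(x,a)\<in>R" for x a
    unfolding c_def by (rule cSup_upper) (use that Vbd[OF z] in \<open>auto simp: V_def bdd_above_def\<close>)
  have c_le: "c \<le> norm (z + y) - b" if "(z,b)\<in>R" for z b
    unfolding c_def by (rule cSup_least[OF Vne]) (use Vbd[OF that] in auto)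
  define R' where "R' = {(x + t *\<^sub>R y, a + t * c) | x a t. (x,a) \<in> R}"
  have uniq: "x = x' \<and> t = t'" if "(x,a)\<in>R" "(x',a')\<in>R" "x + t *\<^sub>R y = x' + t' *\<^sub>R y" for x a x' a' t t'
  proof -
    have "(t - t') *\<^sub>R y = x' - x" using that(3) by (simp add: algebra_simps)
    show ?thesis
    proof (cases "t = t'")
      case True then show ?thesis using that(3) by simp
    next
      case False
      have "(x' - x, a' - a) \<in> R" using add[OF that(2) sc[OF that(1), of "-1"]] by simp
      then have "(inverse (t - t') *\<^sub>R (x' - x), inverse (t-t') * (a' - a)) \<in> R" by (rule sc)
      moreover have "inverse (t - t') *\<^sub>R (x' - x) = y"
      proof -
        have "inverse (t - t') *\<^sub>R (x' - x) = (inverse (t-t') * (t-t')) *\<^sub>R y"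
          by (simp only: \<open>(t - t') *\<^sub>R y = x' - x\<close>[symmetric] scaleR_scaleR)
        then show ?thesis using False by simp
      qed
      ultimately have "y \<in> fst ` R" by force
      with y show ?thesis by blast
    qed
  qed
  have "goodR R'"
    unfolding goodR_def
  proof (intro conjI allI impI)
    fix w u v assume "(w,u)\<in>R'" "(w,v)\<in>R'"
    then obtain x a t x' a' t' where h: "(x,a)\<in>R" "(x',a')\<in>R" "w = x + t *\<^sub>R y" "u = a + t*c"
      "w = x' + t' *\<^sub>R y" "v = a' + t'*c" unfolding R'_def by blast
    then have "x = x' \<and> t = t'" using uniq by metis
    then show "u = v" using h fnc by blast
  next
    fix w u w' v assume "(w,u)\<in>R'" "(w',v)\<in>R'"
    then obtain x a t x' a' t' where h: "(x,a)\<in>R" "(x',a')\<in>R" "w = x + t *\<^sub>R y" "u = a + t*c"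
      "w' = x' + t' *\<^sub>R y" "v = a' + t'*c" unfolding R'_def by blast
    have "(x+x', a+a') \<in> R" using add h by blast
    moreover have "w + w' = (x+x') + (t+t') *\<^sub>R y" "u + v = (a+a') + (t+t')*c"
      using h by (simp_all add: algebra_simps)
    ultimately show "(w+w', u+v) \<in> R'" unfolding R'_def by blast
  next
    fix w u k assume "(w,u)\<in>R'"
    then obtain x a t where h: "(x,a)\<in>R" "w = x + t *\<^sub>R y" "u = a + t*c" unfolding R'_def by blast
    have "(k *\<^sub>R x, k*a) \<in> R" using sc h by blast
    moreover have "k *\<^sub>R w = k *\<^sub>R x + (k*t) *\<^sub>R y" "k * u = k*a + (k*t)*c"
      using h by (simp_all add: algebra_simps)
    ultimately show "(k *\<^sub>R w, k*u) \<in> R'" unfolding R'_def by blast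
  next
    fix w u assume "(w,u)\<in>R'"
    then obtain x a t where h: "(x,a)\<in>R" "w = x + t *\<^sub>R y" "u = a + t*c" unfolding R'_def by blast
    show "u \<le> norm w"
    proof (cases "t = 0")
      case True then show ?thesis using h bd by simp
    next
      case False
      show ?thesis
      proof (cases "t > 0")
        case True
        have m: "(inverse t *\<^sub>R x, inverse t * a) \<in> R" using sc h by blast
        have "c \<le> norm (inverse t *\<^sub>R x + y) - inverse t * a" by (rule c_le[OF m])
        then have "t * c \<le> t * (norm (inverse t *\<^sub>R x + y) - inverse t * a)"
          using True by (simp add: mult_left_mono)
        also have "\<dots> = norm (t *\<^sub>R (inverse t *\<^sub>R x + y)) - a"
        proof -
          have "norm (t *\<^sub>R (inverse t *\<^sub>R x + y)) = t * norm (inverse t *\<^sub>R x + y)"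
            using True by simp
          moreover have "t * (inverse t * a) = a" using True by simp
          ultimately show ?thesis by (subst right_diff_distrib, linarith)
        qed
        also have "t *\<^sub>R (inverse t *\<^sub>R x + y) = w" using True h by (simp add: algebra_simps)
        finally show ?thesis using h by simp
      next
        case False
        with \<open>t \<noteq> 0\<close> have tn: "t < 0" by simp
        define s where "s = - t"
        have sp: "s > 0" using tn s_def by simp
        have m: "(inverse s *\<^sub>R x, inverse s * a) \<in> R" using sc h by blast
        have "inverse s * a - norm (inverse s *\<^sub>R x - y) \<le> c" by (rule c_ge[OF m])
        then have "s * (inverse s * a - norm (inverse s *\<^sub>R x - y)) \<le> s * c"
          using sp by (simp add: mult_left_mono)
        also have "s * (inverse s * a - norm (inverse s *\<^sub>R x - y)) = a - norm (s *\<^sub>R (inverse s *\<^sub>R x - y))"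
        proof -
          have "norm (s *\<^sub>R (inverse s *\<^sub>R x - y)) = s * norm (inverse s *\<^sub>R x - y)"
            using sp by simp
          moreover have "s * (inverse s * a) = a" using sp by simp
          ultimately show ?thesis by (subst right_diff_distrib, linarith)
        qed
        also have "s *\<^sub>R (inverse s *\<^sub>R x - y) = w" using sp h s_def by (simp add: algebra_simps)
        finally show ?thesis using h s_def by simp
      qed
    qed
  qed
  moreover have "R \<subseteq> R'"
  proof
    fix p assume "p \<in> R"
    then obtain x a where "p = (x,a)" "(x,a)\<in>R" by (cases p) auto
    then have "(x + 0 *\<^sub>R y, a + 0 * c) \<in> R'" unfolding R'_def by blast
    then show "p \<in> R'" using \<open>p = (x,a)\<close> by simp
  qed
  moreover have "(y, c) \<in> R'"
  proof -
    have "(0 + 1 *\<^sub>R y, 0 + 1*c) \<in> R'" unfolding R'_def using z by blast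
    then show ?thesis by simp
  qed
  moreover have "(y,c) \<notin> R" using y by force
  ultimately show ?thesis by blast
qed

lemma hahn_banach_point:
  fixes x0 :: "'a::real_normed_vector"
  shows "\<exists>\<phi>. linear \<phi> \<and> (\<forall>x. \<bar>\<phi> x\<bar> \<le> norm x) \<and> \<phi> x0 = norm x0"
proof -
  define A where "A = {R. goodR R \<and> (x0, norm x0) \<in> R}"
  define R0 where "R0 = {(c *\<^sub>R x0, c * norm x0) | c. True}"
  have "R0 \<in> A"
    unfolding A_def goodR_def R0_def
  proof (safe, goal_cases)
    case (1 x a b c d)
    then show ?case
      by (cases "x0 = 0") (auto simp: scaleR_cancel_right)
  next
    case (2 x a y b c d) then show ?case by (auto intro!: exI[of _ "c+d"] simp: algebra_simps)
  next
    case (3 x a c d) then show ?case by (auto intro!: exI[of _ "c*d"] simp: algebra_simps)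
  next
    case (4 x a c) then show ?case by (simp add: mult_right_mono)
  next
    case 5 then show ?case by (auto intro!: exI[of _ 1])
  qed
  have "\<exists>M\<in>A. \<forall>X\<in>A. M \<subseteq> X \<longrightarrow> X = M"
  proof (rule subset_Zorn_nonempty)
    show "A \<noteq> {}" using \<open>R0 \<in> A\<close> by blast
  next
    fix C assume Cne: "C \<noteq> {}" and ch: "subset.chain A C"
    have CA: "C \<subseteq> A" and tot: "\<And>X Y. X\<in>C \<Longrightarrow> Y\<in>C \<Longrightarrow> X \<subseteq> Y \<or> Y \<subseteq> X"
      using ch by (auto simp: subset_chain_def)
    have two: "\<exists>Z\<in>C. p \<in> Z \<and> q \<in> Z" if "p \<in> \<Union>C" "q \<in> \<Union>C" for p q
      using that tot by blast
    have gC: "\<And>Z. Z \<in> C \<Longrightarrow> goodR Z" using CA by (auto simp: A_def)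
    show "\<Union>C \<in> A" unfolding A_def
    proof (intro CollectI conjI)
      show "(x0, norm x0) \<in> \<Union>C" using Cne CA by (auto simp: A_def)
      show "goodR (\<Union>C)" unfolding goodR_def
      proof (intro conjI allI impI)
        fix x a b assume "(x,a) \<in> \<Union>C" "(x,b) \<in> \<Union>C"
        then obtain Z where "Z\<in>C" "(x,a)\<in>Z" "(x,b)\<in>Z" using two by blast
        then show "a = b" using gC unfolding goodR_def by blast
      next
        fix x a y b assume "(x,a) \<in> \<Union>C" "(y,b) \<in> \<Union>C"
        then obtain Z where "Z\<in>C" "(x,a)\<in>Z" "(y,b)\<in>Z" using two by blast
        then show "(x+y, a+b) \<in> \<Union>C" using gC unfolding goodR_def by blast
      next
        fix x a c assume "(x,a) \<in> \<Union>C"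
        then obtain Z where "Z\<in>C" "(x,a)\<in>Z" by blast
        then show "(c *\<^sub>R x, c*a) \<in> \<Union>C" using gC unfolding goodR_def by blast
      next
        fix x a assume "(x,a) \<in> \<Union>C"
        then obtain Z where "Z\<in>C" "(x,a)\<in>Z" by blast
        then show "a \<le> norm x" using gC unfolding goodR_def by blast
      qed
    qed
  qed
  then obtain M where MA: "M \<in> A" and Mmax: "\<And>X. X\<in>A \<Longrightarrow> M \<subseteq> X \<Longrightarrow> X = M" by blast
  have gM: "goodR M" and x0M: "(x0, norm x0) \<in> M" using MA by (auto simp: A_def)
  have fnc: "\<And>x a b. (x,a)\<in>M \<Longrightarrow> (x,b)\<in>M \<Longrightarrow> a=b"
   and add: "\<And>x a z b. (x,a)\<in>M \<Longrightarrow> (z,b)\<in>M \<Longrightarrow> (x+z,a+b)\<in>M"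
   and sc: "\<And>x a c. (x,a)\<in>M \<Longrightarrow> (c *\<^sub>R x, c*a)\<in>M"
   and bd: "\<And>x a. (x,a)\<in>M \<Longrightarrow> a \<le> norm x"
    using gM unfolding goodR_def by blast+
  have tot: "\<exists>a. (x,a) \<in> M" for x
  proof (rule ccontr)
    assume "\<not> ?thesis"
    then have "x \<notin> fst ` M" by force
    then obtain R' where "goodR R'" "M \<subset> R'" using goodR_ext[OF gM _ ] x0M by blast
    then have "R' \<in> A" using x0M by (auto simp: A_def)
    then show False using Mmax \<open>M \<subset> R'\<close> by blast
  qed
  define \<phi> where "\<phi> x = (THE a. (x,a) \<in> M)" for x
  have phiM: "(x, \<phi> x) \<in> M" for x
    unfolding \<phi>_def using tot[of x] fnc by (metis theI)
  have phi_eq: "\<phi> x = a" if "(x,a)\<in>M" for x a using fnc[OF that phiM] by simp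
  have "linear \<phi>"
  proof (rule linearI)
    fix u v show "\<phi> (u + v) = \<phi> u + \<phi> v" by (rule phi_eq[OF add[OF phiM phiM]])
  next
    fix k u show "\<phi> (k *\<^sub>R u) = k *\<^sub>R \<phi> u" using phi_eq[OF sc[OF phiM]] by simp
  qed
  moreover have "\<bar>\<phi> x\<bar> \<le> norm x" for x
  proof -
    have "\<phi> x \<le> norm x" using bd phiM by blast
    moreover have "- \<phi> x \<le> norm (- x)" using bd[OF sc[OF phiM, of "-1"]] by simp
    ultimately show ?thesis by simp
  qed
  moreover have "\<phi> x0 = norm x0" using phi_eq[OF x0M] .
  ultimately show ?thesis by blast
qed



lemma lp_basic:
  fixes f :: "int \<Rightarrow> 'a::real_normed_vector"
  assumes f: "f \<in> lp_space p" and p1: "1 \<le> p" and p2: "p \<le> 2"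
  shows "norm (f n) \<le> lp_norm p f"
    and "(\<lambda>n. (norm (f n))^2) summable_on UNIV"
    and "(\<Sum>\<^sub>\<infinity>n. (norm (f n))^2) \<le> (lp_norm p f)^2"
proof -
  define S where "S = (\<Sum>\<^sub>\<infinity>n. norm (f n) powr p)"
  define L where "L = lp_norm p f"
  have sm: "(\<lambda>n. norm (f n) powr p) summable_on UNIV" using f by (simp add: lp_space_def)
  have S0: "S \<ge> 0" unfolding S_def by (rule infsum_nonneg) simp
  have LS: "L = S powr (1/p)" by (simp add: L_def S_def lp_norm_def)
  have L0: "L \<ge> 0" using LS by simp
  have SL: "S = L powr p" using LS S0 p1 by (simp add: powr_powr)
  have le1: "norm (f m) powr p \<le> S" for m
  proof -
    have "sum (\<lambda>n. norm (f n) powr p) {m} \<le> S"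
      unfolding S_def by (rule finite_sum_le_infsum[OF sm]) auto
    then show ?thesis by simp
  qed
  have nL: "norm (f m) \<le> L" for m
  proof -
    have "(norm (f m) powr p) powr (1/p) \<le> S powr (1/p)"
      by (rule powr_mono2) (use le1 p1 in auto)
    then show ?thesis using p1 LS by (simp add: powr_powr)
  qed
  then show "norm (f n) \<le> lp_norm p f" by (simp add: L_def)
  have pt: "(norm (f m))^2 \<le> L powr (2 - p) * norm (f m) powr p" for m
  proof -
    have "(norm (f m))^2 = norm (f m) powr 2" by simp
    also have "\<dots> = norm (f m) powr (2 - p) * norm (f m) powr p"
      by (simp flip: powr_add)
    also have "\<dots> \<le> L powr (2 - p) * norm (f m) powr p"
      by (rule mult_right_mono) (rule powr_mono2, use p2 nL in auto)
    finally show ?thesis .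
  qed
  have sm2: "(\<lambda>n. L powr (2 - p) * norm (f n) powr p) summable_on UNIV"
    using sm by (rule summable_on_cmult_right)
  show sq: "(\<lambda>n. (norm (f n))^2) summable_on UNIV"
    by (rule summable_on_comparison_test[OF sm2]) (use pt in auto)
  have "(\<Sum>\<^sub>\<infinity>n. (norm (f n))^2) \<le> (\<Sum>\<^sub>\<infinity>n. L powr (2 - p) * norm (f n) powr p)"
    by (rule infsum_mono[OF sq sm2]) (use pt in auto)
  also have "\<dots> = L powr (2 - p) * S" unfolding S_def by (rule infsum_cmult_right) (use sm in auto)
  also have "\<dots> = L powr (2 - p) * L powr p" using SL by simp
  also have "\<dots> = L powr 2" by (simp flip: powr_add)
  also have "\<dots> = L^2" using L0 by simp
  finally show "(\<Sum>\<^sub>\<infinity>n. (norm (f n))^2) \<le> (lp_norm p f)^2" by (simp add: L_def)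
qed

lemma lp_add:
  fixes f g :: "int \<Rightarrow> 'a::real_normed_vector"
  assumes f: "f \<in> lp_space p" and g: "g \<in> lp_space p" and p1: "1 \<le> p"
  shows "(\<lambda>n. f n + g n) \<in> lp_space p"
proof -
  have sf: "(\<lambda>n. norm (f n) powr p) summable_on UNIV" using f by (simp add: lp_space_def)
  have sg: "(\<lambda>n. norm (g n) powr p) summable_on UNIV" using g by (simp add: lp_space_def)
  have s: "(\<lambda>n. 2 powr p * (norm (f n) powr p + norm (g n) powr p)) summable_on UNIV"
    by (rule summable_on_cmult_right, rule summable_on_add[OF sf sg])
  have "norm (f n + g n) powr p \<le> 2 powr p * (norm (f n) powr p + norm (g n) powr p)" for n
  proof -
    have "norm (f n + g n) powr p \<le> (2 * max (norm (f n)) (norm (g n))) powr p"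
      by (rule powr_mono2) (use p1 norm_triangle_ineq[of "f n" "g n"] in auto)
    also have "\<dots> = 2 powr p * max (norm (f n)) (norm (g n)) powr p" by (simp add: powr_mult)
    also have "max (norm (f n)) (norm (g n)) powr p \<le> norm (f n) powr p + norm (g n) powr p"
      by (simp add: max_def)
    then have "2 powr p * max (norm (f n)) (norm (g n)) powr p \<le> 2 powr p * (norm (f n) powr p + norm (g n) powr p)"
      by (rule mult_left_mono) simp
    finally show ?thesis .
  qed
  then show ?thesis unfolding lp_space_def
    by (auto intro!: summable_on_comparison_test[OF s])
qed

lemma lp_scale:
  fixes f :: "int \<Rightarrow> 'a::real_normed_vector"
  assumes f: "f \<in> lp_space p"
  shows "(\<lambda>n. c *\<^sub>R f n) \<in> lp_space p"
proof -
  have sf: "(\<lambda>n. norm (f n) powr p) summable_on UNIV" using f by (simp add: lp_space_def)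
  have "(\<lambda>n. \<bar>c\<bar> powr p * norm (f n) powr p) summable_on UNIV"
    by (rule summable_on_cmult_right[OF sf])
  then show ?thesis unfolding lp_space_def by (simp add: powr_mult)
qed

lemma lp_shift:
  fixes f :: "int \<Rightarrow> 'a::real_normed_vector"
  assumes f: "f \<in> lp_space p"
  shows "shift_seq k f \<in> lp_space p"
proof -
  have sf: "(\<lambda>n. norm (f n) powr p) summable_on UNIV" using f by (simp add: lp_space_def)
  have b: "bij_betw (\<lambda>n. n - k) UNIV UNIV"
    by (rule bij_betwI[where g="\<lambda>n. n + k"]) auto
  show ?thesis unfolding lp_space_def shift_seq_def
    using summable_on_reindex_bij_betw[OF b, of "\<lambda>n. norm (f n) powr p"] sf by simp
qed

lemma lp_zero: "(\<lambda>n. 0) \<in> lp_space p"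
  by (simp add: lp_space_def)

lemma lp_span:
  fixes F :: "int \<Rightarrow> 'a::real_normed_vector"
  assumes F: "F \<in> lp_space p" and p1: "1 \<le> p" and S: "finite S"
  shows "(\<lambda>n. \<Sum>k\<in>S. c k *\<^sub>R shift_seq k F n) \<in> lp_space p"
  using S
proof (induction S rule: finite_induct)
  case empty then show ?case by (simp add: lp_zero)
next
  case (insert k S)
  have "(\<lambda>n. c k *\<^sub>R shift_seq k F n + (\<Sum>k\<in>S. c k *\<^sub>R shift_seq k F n)) \<in> lp_space p"
    by (rule lp_add[OF lp_scale[OF lp_shift[OF F]] insert.IH p1])
  then show ?case using insert by simp
qed

lemma lp_single: "(\<lambda>n. if n = m then x else 0) \<in> lp_space p"
  unfolding lp_space_def
  by (auto intro!: finite_nonzero_values_imp_summable_on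
      intro: finite_subset[of _ "{m}"])



lemma amgm: fixes t N w :: real assumes "t > 0" shows "N * w \<le> (t * N^2 + w^2 / t) / 2"
proof -
  have "0 \<le> (t*N - w)^2" by simp
  then have "2 * t * (N * w) \<le> t * (t * N^2) + w^2" by (simp add: power2_eq_square algebra_simps)
  then have "2 * t * (N * w) \<le> t * (t * N^2 + w^2 / t)" using assms by (simp add: algebra_simps)
  then have "t * (2 * (N * w)) \<le> t * (t * N^2 + w^2 / t)" by (simp add: algebra_simps)
  then have "2 * (N * w) \<le> t * N^2 + w^2 / t" using assms by (simp add: mult_le_cancel_left_pos)
  then show ?thesis by simp
qed

lemma sq_summable_reindex:
  fixes u :: "int \<Rightarrow> real"
  assumes "(\<lambda>n. (u n)^2) summable_on UNIV"
  shows "(\<lambda>n. (u (k - n))^2) summable_on UNIV" "(\<lambda>n. (u (n - k))^2) summable_on UNIV"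
    "(\<lambda>n. (u (- n))^2) summable_on UNIV"
proof -
  have b1: "bij_betw (\<lambda>n. k - n) UNIV UNIV" by (rule bij_betwI[where g="\<lambda>n. k - n"]) auto
  have b2: "bij_betw (\<lambda>n. n - k) UNIV UNIV" by (rule bij_betwI[where g="\<lambda>n. n + k"]) auto
  have b3: "bij_betw (\<lambda>n. - n) UNIV (UNIV::int set)" by (rule bij_betwI[where g="\<lambda>n. - n"]) auto
  show "(\<lambda>n. (u (k - n))^2) summable_on UNIV"
    using summable_on_reindex_bij_betw[OF b1, of "\<lambda>n. (u n)^2"] assms by simp
  show "(\<lambda>n. (u (n - k))^2) summable_on UNIV"
    using summable_on_reindex_bij_betw[OF b2, of "\<lambda>n. (u n)^2"] assms by simp
  show "(\<lambda>n. (u (- n))^2) summable_on UNIV"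
    using summable_on_reindex_bij_betw[OF b3, of "\<lambda>n. (u n)^2"] assms by simp
qed

lemma prod_summable:
  fixes u v :: "int \<Rightarrow> real"
  assumes "(\<lambda>n. (u n)^2) summable_on UNIV" "(\<lambda>n. (v n)^2) summable_on UNIV"
  shows "(\<lambda>n. u n * v n) summable_on UNIV"
proof -
  have s: "(\<lambda>n. (u n)^2 + (v n)^2) summable_on UNIV" by (rule summable_on_add[OF assms])
  have "\<bar>u n * v n\<bar> \<le> (u n)^2 + (v n)^2" for n
  proof -
    have "0 \<le> (\<bar>u n\<bar> - \<bar>v n\<bar>)^2" by (rule zero_le_power2)
    moreover have "(\<bar>u n\<bar> - \<bar>v n\<bar>)^2 = (u n)^2 + (v n)^2 - 2*\<bar>u n\<bar>*\<bar>v n\<bar>"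
      by (simp only: power2_diff power2_abs)
    moreover have "0 \<le> \<bar>u n\<bar> * \<bar>v n\<bar>" by simp
    ultimately show ?thesis by (subst abs_mult, linarith)
  qed
  then have "(\<lambda>n. \<bar>u n * v n\<bar>) summable_on UNIV"
    by (intro summable_on_comparison_test[OF s]) simp_all
  then show ?thesis by (subst summable_on_iff_abs_summable_on_real) simp
qed

lemma summable_on_diff':
  fixes f g :: "int \<Rightarrow> real"
  assumes "f summable_on A" "g summable_on A"
  shows "(\<lambda>x. f x - g x) summable_on A" "infsum (\<lambda>x. f x - g x) A = infsum f A - infsum g A"
proof -
  have g': "(\<lambda>x. - g x) summable_on A" using assms(2) by (simp add: summable_on_uminus)
  show "(\<lambda>x. f x - g x) summable_on A" using summable_on_add[OF assms(1) g'] by simp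
  show "infsum (\<lambda>x. f x - g x) A = infsum f A - infsum g A"
    using infsum_add[OF assms(1) g'] by (simp add: infsum_uminus)
qed

lemma corr_zero:
  fixes a b :: "int \<Rightarrow> real"
  assumes a2: "(\<lambda>n. (a n)^2) summable_on UNIV" and b2: "(\<lambda>n. (b n)^2) summable_on UNIV"
  shows "(\<lambda>n. a (n - k) * b (- n) - b (n - k) * a (- n)) summable_on UNIV"
    and "(\<Sum>\<^sub>\<infinity>n. a (n - k) * b (- n) - b (n - k) * a (- n)) = 0"
proof -
  have s1: "(\<lambda>n. a (n - k) * b (- n)) summable_on UNIV"
    by (rule prod_summable) (use sq_summable_reindex[OF a2] sq_summable_reindex[OF b2] in auto)
  have s2: "(\<lambda>n. b (n - k) * a (- n)) summable_on UNIV"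
    by (rule prod_summable) (use sq_summable_reindex[OF a2] sq_summable_reindex[OF b2] in auto)
  show "(\<lambda>n. a (n - k) * b (- n) - b (n - k) * a (- n)) summable_on UNIV"
    by (rule summable_on_diff'(1)[OF s1 s2])
  have b1: "bij_betw (\<lambda>n. k - n) UNIV UNIV" by (rule bij_betwI[where g="\<lambda>n. k - n"]) auto
  have "(\<Sum>\<^sub>\<infinity>n. b (n - k) * a (- n)) = (\<Sum>\<^sub>\<infinity>n. b ((k - n) - k) * a (- (k - n)))"
    by (rule infsum_reindex_bij_betw[OF b1, of "\<lambda>n. b (n - k) * a (- n)", symmetric])
  also have "\<dots> = (\<Sum>\<^sub>\<infinity>n. a (n - k) * b (- n))"
  proof (rule infsum_cong)
    fix n
    have "k - n - k = -n" "-(k-n) = n - k" by simp_all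
    then show "b ((k - n) - k) * a (- (k - n)) = a (n - k) * b (- n)" by (metis mult.commute)
  qed
  finally have eq: "(\<Sum>\<^sub>\<infinity>n. b (n - k) * a (- n)) = (\<Sum>\<^sub>\<infinity>n. a (n - k) * b (- n))" .
  show "(\<Sum>\<^sub>\<infinity>n. a (n - k) * b (- n) - b (n - k) * a (- n)) = 0"
    using summable_on_diff'(2)[OF s1 s2] eq by linarith
qed

lemma infsum_finsum:
  fixes g :: "int \<Rightarrow> int \<Rightarrow> real"
  assumes "finite S" "\<And>k. k \<in> S \<Longrightarrow> g k summable_on A"
  shows "(\<lambda>n. \<Sum>k\<in>S. g k n) summable_on A \<and> infsum (\<lambda>n. \<Sum>k\<in>S. g k n) A = (\<Sum>k\<in>S. infsum (g k) A)"
  using assms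
proof (induction S rule: finite_induct)
  case empty then show ?case by simp
next
  case (insert k S)
  then have h: "g k summable_on A" "(\<lambda>n. \<Sum>k\<in>S. g k n) summable_on A"
    "infsum (\<lambda>n. \<Sum>k\<in>S. g k n) A = (\<Sum>k\<in>S. infsum (g k) A)" by auto
  have e: "(\<lambda>n. \<Sum>k\<in>insert k S. g k n) = (\<lambda>n. g k n + (\<Sum>k\<in>S. g k n))"
    using insert(1,2) by simp
  have e2: "(\<Sum>k\<in>insert k S. infsum (g k) A) = infsum (g k) A + (\<Sum>k\<in>S. infsum (g k) A)"
    using insert(1,2) by simp
  show ?case
  proof
    show "(\<lambda>n. \<Sum>k\<in>insert k S. g k n) summable_on A"
      unfolding e by (rule summable_on_add[OF h(1,2)])
    show "infsum (\<lambda>n. \<Sum>k\<in>insert k S. g k n) A = (\<Sum>k\<in>insert k S. infsum (g k) A)"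
      unfolding e e2 infsum_add[OF h(1,2)] h(3) ..
  qed
qed



lemma infsum_single': "(\<Sum>\<^sub>\<infinity>n. if n = j then v else (0::real)) = v"
proof -
  have "(\<Sum>\<^sub>\<infinity>n. if n = j then v else (0::real)) = (\<Sum>\<^sub>\<infinity>n\<in>{j}. if n = j then v else 0)"
    by (rule infsum_cong_neutral) auto
  then show ?thesis by simp
qed

lemma phi_span:
  assumes "linear \<phi>"
  shows "\<phi> (\<Sum>k\<in>S. c k *\<^sub>R shift_seq k F n) = (\<Sum>k\<in>S. c k * \<phi> (F (n - k)))"
  using assms by (simp add: linear_sum linear_scale shift_seq_def)

lemma lp_norm_nonneg: "lp_norm p f \<ge> 0"
  by (simp add: lp_norm_def)

lemma Lam_bound:
  fixes D :: "int \<Rightarrow> 'a::real_normed_vector" and \<phi>1 \<phi>2 :: "'a \<Rightarrow> real" and a b :: "int \<Rightarrow> real"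
  assumes D: "D \<in> lp_space p" and p1: "1 \<le> p" and p2: "p \<le> 2"
    and b1: "\<And>x. \<bar>\<phi>1 x\<bar> \<le> norm x" and b2: "\<And>x. \<bar>\<phi>2 x\<bar> \<le> norm x"
    and a2: "(\<lambda>n. (a n)^2) summable_on UNIV" and bb2: "(\<lambda>n. (b n)^2) summable_on UNIV"
  shows "(\<lambda>n. \<phi>1 (D n) * b (-n) - \<phi>2 (D n) * a (-n)) summable_on UNIV"
    and "\<And>t. t > 0 \<Longrightarrow> \<bar>\<Sum>\<^sub>\<infinity>n. \<phi>1 (D n) * b (-n) - \<phi>2 (D n) * a (-n)\<bar>
           \<le> (t * (lp_norm p D)^2 + (\<Sum>\<^sub>\<infinity>n. (\<bar>a (-n)\<bar> + \<bar>b (-n)\<bar>)^2) / t) / 2"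
proof -
  define T where "T n = \<phi>1 (D n) * b (-n) - \<phi>2 (D n) * a (-n)" for n
  define w where "w n = \<bar>a (-n)\<bar> + \<bar>b (-n)\<bar>" for n
  define N where "N n = norm (D n)" for n
  have am: "(\<lambda>n. (a (- n))^2) summable_on UNIV" using sq_summable_reindex(3)[OF a2] .
  have bm: "(\<lambda>n. (b (- n))^2) summable_on UNIV" using sq_summable_reindex(3)[OF bb2] .
  have s2: "(\<lambda>n. 2 * ((a (-n))^2 + (b (-n))^2)) summable_on UNIV"
    by (rule summable_on_cmult_right, rule summable_on_add[OF am bm])
  have wle: "(w n)^2 \<le> 2 * ((a (-n))^2 + (b (-n))^2)" for n
  proof -
    have "0 \<le> (\<bar>a (-n)\<bar> - \<bar>b (-n)\<bar>)^2" by (rule zero_le_power2)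
    moreover have "(\<bar>a (-n)\<bar> - \<bar>b (-n)\<bar>)^2 = (a (-n))^2 + (b (-n))^2 - 2*\<bar>a (-n)\<bar>*\<bar>b (-n)\<bar>"
      by (simp only: power2_diff power2_abs)
    moreover have "(w n)^2 = (a (-n))^2 + (b (-n))^2 + 2*\<bar>a (-n)\<bar>*\<bar>b (-n)\<bar>"
      unfolding w_def by (simp only: power2_sum power2_abs)
    ultimately show ?thesis by (smt (verit))
  qed
  have w2: "(\<lambda>n. (w n)^2) summable_on UNIV"
    by (rule summable_on_comparison_test[OF s2]) (use wle in simp_all)
  have N2: "(\<lambda>n. (N n)^2) summable_on UNIV" unfolding N_def by (rule lp_basic(2)[OF D p1 p2])
  have N2le: "(\<Sum>\<^sub>\<infinity>n. (N n)^2) \<le> (lp_norm p D)^2" unfolding N_def by (rule lp_basic(3)[OF D p1 p2])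
  have Tle: "\<bar>T n\<bar> \<le> N n * w n" for n
  proof -
    have "\<bar>T n\<bar> \<le> \<bar>\<phi>1 (D n)\<bar> * \<bar>b (-n)\<bar> + \<bar>\<phi>2 (D n)\<bar> * \<bar>a (-n)\<bar>"
      unfolding T_def abs_mult[symmetric] by (rule abs_triangle_ineq4)
    also have "\<dots> \<le> N n * \<bar>b (-n)\<bar> + N n * \<bar>a (-n)\<bar>"
      unfolding N_def by (intro add_mono mult_right_mono b1 b2) simp_all
    also have "\<dots> = N n * w n" unfolding w_def by (simp add: algebra_simps)
    finally show ?thesis .
  qed
  have key: "(\<lambda>n. \<bar>T n\<bar>) summable_on UNIV \<and> \<bar>infsum T UNIV\<bar> \<le> (t * (lp_norm p D)^2 + (\<Sum>\<^sub>\<infinity>n. (w n)^2) / t) / 2"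
    if t: "t > 0" for t
  proof -
    define B where "B n = (t/2) * (N n)^2 + (1/(2*t)) * (w n)^2" for n
    have sB1: "(\<lambda>n. (t/2) * (N n)^2) summable_on UNIV" by (rule summable_on_cmult_right[OF N2])
    have sB2: "(\<lambda>n. (1/(2*t)) * (w n)^2) summable_on UNIV" by (rule summable_on_cmult_right[OF w2])
    have sB: "B summable_on UNIV" unfolding B_def by (rule summable_on_add[OF sB1 sB2])
    have TB: "\<bar>T n\<bar> \<le> B n" for n
    proof -
      have "\<bar>T n\<bar> \<le> N n * w n" by (rule Tle)
      also have "\<dots> \<le> (t * (N n)^2 + (w n)^2 / t) / 2" by (rule amgm[OF t])
      also have "\<dots> = B n" unfolding B_def by (simp add: field_simps)
      finally show ?thesis .
    qed
    have sT: "(\<lambda>n. \<bar>T n\<bar>) summable_on UNIV"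
      by (rule summable_on_comparison_test[OF sB]) (use TB in simp_all)
    have "\<bar>infsum T UNIV\<bar> \<le> (\<Sum>\<^sub>\<infinity>n. \<bar>T n\<bar>)"
      using norm_infsum_bound[of T UNIV] sT by simp
    also have "\<dots> \<le> infsum B UNIV" by (rule infsum_mono[OF sT sB TB])
    also have "infsum B UNIV = (t/2) * (\<Sum>\<^sub>\<infinity>n. (N n)^2) + (1/(2*t)) * (\<Sum>\<^sub>\<infinity>n. (w n)^2)"
      unfolding B_def infsum_add[OF sB1 sB2] infsum_cmult_right[OF N2] infsum_cmult_right[OF w2] ..
    also have "\<dots> \<le> (t/2) * (lp_norm p D)^2 + (1/(2*t)) * (\<Sum>\<^sub>\<infinity>n. (w n)^2)"
      using N2le t by (simp add: mult_left_mono)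
    also have "\<dots> = (t * (lp_norm p D)^2 + (\<Sum>\<^sub>\<infinity>n. (w n)^2) / t) / 2"
      using t by (simp add: field_simps)
    finally show ?thesis using sT by simp
  qed
  have "(\<lambda>n. \<bar>T n\<bar>) summable_on UNIV" using key[of 1] by simp
  then have "T summable_on UNIV" by (subst summable_on_iff_abs_summable_on_real) simp
  then show "(\<lambda>n. \<phi>1 (D n) * b (-n) - \<phi>2 (D n) * a (-n)) summable_on UNIV"
    unfolding T_def .
  show "\<bar>\<Sum>\<^sub>\<infinity>n. \<phi>1 (D n) * b (-n) - \<phi>2 (D n) * a (-n)\<bar>
           \<le> (t * (lp_norm p D)^2 + (\<Sum>\<^sub>\<infinity>n. (\<bar>a (-n)\<bar> + \<bar>b (-n)\<bar>)^2) / t) / 2" if "t > 0" for t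
    using key[OF that] unfolding T_def w_def by blast
qed

lemma cts_approx:
  fixes F G :: "int \<Rightarrow> 'a::real_normed_vector"
  assumes G: "G \<in> closed_translate_span p F" and F: "F \<in> lp_space p" and p1: "1 \<le> p" and e: "e > 0"
  shows "\<exists>S c. finite S \<and> (\<lambda>n. G n - (\<Sum>k\<in>S. c k *\<^sub>R shift_seq k F n)) \<in> lp_space p
      \<and> lp_norm p (\<lambda>n. G n - (\<Sum>k\<in>S. c k *\<^sub>R shift_seq k F n)) < e"
proof -
  have Glp: "G \<in> lp_space p" using G by (simp add: closed_translate_span_def)
  obtain H where H: "H \<in> translate_span F" "lp_norm p (\<lambda>n. G n - H n) < e"
    using G e unfolding closed_translate_span_def by blast
  then obtain S c where S: "finite S" "H = (\<lambda>n. \<Sum>k\<in>S. c k *\<^sub>R shift_seq k F n)"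
    unfolding translate_span_def by blast
  have Hlp: "H \<in> lp_space p" using S lp_span[OF F p1 S(1)] by simp
  have "(\<lambda>n. G n + (-1) *\<^sub>R H n) \<in> lp_space p" by (rule lp_add[OF Glp lp_scale[OF Hlp] p1])
  then have "(\<lambda>n. G n - H n) \<in> lp_space p" by simp
  then show ?thesis using S H by blast
qed



lemma main_core:
  fixes F :: "int \<Rightarrow> 'a::real_normed_vector" and \<phi>1 \<phi>2 :: "'a \<Rightarrow> real"
  assumes p1: "1 \<le> p" and p2: "p \<le> 2" and F: "F \<in> lp_space p"
    and l1: "linear \<phi>1" and l2: "linear \<phi>2"
    and b1: "\<And>x. \<bar>\<phi>1 x\<bar> \<le> norm x" and b2: "\<And>x. \<bar>\<phi>2 x\<bar> \<le> norm x"
    and x1: "\<phi>1 x1 \<noteq> 0" and x2a: "\<phi>1 x2 = 0" and x2b: "\<phi>2 x2 \<noteq> 0"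
  shows "\<exists>G \<in> lp_space p. G \<notin> closed_translate_span p F"
proof -
  define a where "a n = \<phi>1 (F n)" for n
  define b where "b n = \<phi>2 (F n)" for n
  have Fsq: "(\<lambda>n. (norm (F n))^2) summable_on UNIV" by (rule lp_basic(2)[OF F p1 p2])
  have a2: "(\<lambda>n. (a n)^2) summable_on UNIV"
  proof (rule summable_on_comparison_test[OF Fsq])
    fix n show "(a n)^2 \<le> (norm (F n))^2"
      unfolding a_def using power_mono[OF b1[of "F n"] abs_ge_zero, of 2] by simp
  qed simp
  have bb2: "(\<lambda>n. (b n)^2) summable_on UNIV"
  proof (rule summable_on_comparison_test[OF Fsq])
    fix n show "(b n)^2 \<le> (norm (F n))^2"
      unfolding b_def using power_mono[OF b2[of "F n"] abs_ge_zero, of 2] by simp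
  qed simp
  show ?thesis
  proof (cases "\<exists>m. a m \<noteq> 0 \<or> b m \<noteq> 0")
    case False
    then have ab0: "\<And>m. a m = 0" by blast
    define G where "G = (\<lambda>n::int. if n = 0 then x1 else 0)"
    have Glp: "G \<in> lp_space p" unfolding G_def by (rule lp_single)
    have "G \<notin> closed_translate_span p F"
    proof
      assume "G \<in> closed_translate_span p F"
      from cts_approx[OF this F p1, of "\<bar>\<phi>1 x1\<bar>"] x1 obtain S c where
        S: "finite S" and D: "(\<lambda>n. G n - (\<Sum>k\<in>S. c k *\<^sub>R shift_seq k F n)) \<in> lp_space p"
        and Dn: "lp_norm p (\<lambda>n. G n - (\<Sum>k\<in>S. c k *\<^sub>R shift_seq k F n)) < \<bar>\<phi>1 x1\<bar>" by auto
      have "\<phi>1 (\<Sum>k\<in>S. c k *\<^sub>R shift_seq k F 0) = (\<Sum>k\<in>S. c k * a (0 - k))"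
        unfolding a_def by (rule phi_span[OF l1])
      also have "\<dots> = 0" using ab0 by simp
      finally have h0: "\<phi>1 (\<Sum>k\<in>S. c k *\<^sub>R shift_seq k F 0) = 0" .
      have "\<bar>\<phi>1 x1\<bar> = \<bar>\<phi>1 (G 0 - (\<Sum>k\<in>S. c k *\<^sub>R shift_seq k F 0))\<bar>"
        using h0 by (simp add: G_def linear_diff[OF l1])
      also have "\<dots> \<le> norm (G 0 - (\<Sum>k\<in>S. c k *\<^sub>R shift_seq k F 0))" by (rule b1)
      also have "\<dots> \<le> lp_norm p (\<lambda>n. G n - (\<Sum>k\<in>S. c k *\<^sub>R shift_seq k F n))"
        by (rule lp_basic(1)[OF D p1 p2])
      finally show False using Dn by simp
    qed
    then show ?thesis using Glp by blast
  next
    case True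
    then obtain m where m: "a m \<noteq> 0 \<or> b m \<noteq> 0" by blast
    define x where "x = (if a m \<noteq> 0 then x2 else x1)"
    have xne: "\<phi>1 x * b m - \<phi>2 x * a m \<noteq> 0"
      using m x1 x2a x2b unfolding x_def by auto
    define G where "G = (\<lambda>n::int. if n = - m then x else 0)"
    have Glp: "G \<in> lp_space p" unfolding G_def by (rule lp_single)
    define \<Lambda> where "\<Lambda> D = (\<Sum>\<^sub>\<infinity>n. \<phi>1 (D n) * b (-n) - \<phi>2 (D n) * a (-n))" for D :: "int \<Rightarrow> 'a"
    have LG: "\<Lambda> G = \<phi>1 x * b m - \<phi>2 x * a m"
    proof -
      have "(\<lambda>n. \<phi>1 (G n) * b (-n) - \<phi>2 (G n) * a (-n)) = (\<lambda>n. if n = -m then \<phi>1 x * b m - \<phi>2 x * a m else 0)"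
        by (auto simp: G_def linear_0[OF l1] linear_0[OF l2])
      then show ?thesis unfolding \<Lambda>_def by (simp add: infsum_single')
    qed
    define \<delta> where "\<delta> = \<bar>\<Lambda> G\<bar>"
    have dpos: "\<delta> > 0" using xne LG \<delta>_def by simp
    define W where "W = (\<Sum>\<^sub>\<infinity>n. (\<bar>a (-n)\<bar> + \<bar>b (-n)\<bar>)^2)"
    have W0: "W \<ge> 0" unfolding W_def by (rule infsum_nonneg) simp
    define t where "t = 2 * (W + 1) / \<delta>"
    define e where "e = \<delta> / (2 * (W + 1))"
    have tpos: "t > 0" using dpos W0 by (simp add: t_def)
    have epos: "e > 0" using dpos W0 by (simp add: e_def)
    have "G \<notin> closed_translate_span p F"
    proof
      assume "G \<in> closed_translate_span p F"
      from cts_approx[OF this F p1 epos] obtain S c where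
        S: "finite S" and D: "(\<lambda>n. G n - (\<Sum>k\<in>S. c k *\<^sub>R shift_seq k F n)) \<in> lp_space p"
        and Dn: "lp_norm p (\<lambda>n. G n - (\<Sum>k\<in>S. c k *\<^sub>R shift_seq k F n)) < e" by auto
      define H where "H = (\<lambda>n. \<Sum>k\<in>S. c k *\<^sub>R shift_seq k F n)"
      define L where "L = lp_norm p (\<lambda>n. G n - H n)"
      have Hlp: "H \<in> lp_space p" unfolding H_def by (rule lp_span[OF F p1 S])
      have TH: "\<phi>1 (H n) * b (-n) - \<phi>2 (H n) * a (-n)
          = (\<Sum>k\<in>S. c k * (a (n - k) * b (- n) - b (n - k) * a (- n)))" for n
      proof -
        have "\<phi>1 (H n) = (\<Sum>k\<in>S. c k * a (n - k))" unfolding H_def a_def by (rule phi_span[OF l1])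
        moreover have "\<phi>2 (H n) = (\<Sum>k\<in>S. c k * b (n - k))" unfolding H_def b_def by (rule phi_span[OF l2])
        moreover have "(\<Sum>k\<in>S. c k * (a (n - k) * b (- n) - b (n - k) * a (- n)))
           = (\<Sum>k\<in>S. c k * a (n - k)) * b (-n) - (\<Sum>k\<in>S. c k * b (n - k)) * a (-n)"
          by (simp add: sum_distrib_right sum_subtractf[symmetric] right_diff_distrib mult.assoc)
        ultimately show ?thesis by simp
      qed
      have hsum: "\<And>k. k \<in> S \<Longrightarrow> (\<lambda>n. c k * (a (n - k) * b (- n) - b (n - k) * a (- n))) summable_on UNIV"
        by (rule summable_on_cmult_right, rule corr_zero(1)[OF a2 bb2])
      have LH: "(\<lambda>n. \<phi>1 (H n) * b (-n) - \<phi>2 (H n) * a (-n)) summable_on UNIV \<and> \<Lambda> H = 0"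
      proof -
        note fs = infsum_finsum[OF S hsum]
        have "(\<Sum>k\<in>S. infsum (\<lambda>n. c k * (a (n - k) * b (- n) - b (n - k) * a (- n))) UNIV) = 0"
          by (simp add: infsum_cmult_right[OF corr_zero(1)[OF a2 bb2]] corr_zero(2)[OF a2 bb2])
        then show ?thesis using fs unfolding \<Lambda>_def TH by simp
      qed
      have sG: "(\<lambda>n. \<phi>1 (G n) * b (-n) - \<phi>2 (G n) * a (-n)) summable_on UNIV"
        by (rule Lam_bound(1)[OF Glp p1 p2 b1 b2 a2 bb2])
      have Dlp: "(\<lambda>n. G n - H n) \<in> lp_space p" using D unfolding H_def .
      have eqD: "(\<lambda>n. \<phi>1 (G n - H n) * b (-n) - \<phi>2 (G n - H n) * a (-n))
          = (\<lambda>n. (\<phi>1 (G n) * b (-n) - \<phi>2 (G n) * a (-n)) - (\<phi>1 (H n) * b (-n) - \<phi>2 (H n) * a (-n)))"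
        by (simp add: linear_diff[OF l1] linear_diff[OF l2] algebra_simps)
      have "\<Lambda> (\<lambda>n. G n - H n) = \<Lambda> G - \<Lambda> H"
        unfolding \<Lambda>_def eqD using summable_on_diff'(2)[OF sG conjunct1[OF LH]] by simp
      then have LD: "\<Lambda> (\<lambda>n. G n - H n) = \<Lambda> G" using LH by simp
      have bnd: "\<bar>\<Lambda> (\<lambda>n. G n - H n)\<bar> \<le> (t * L^2 + W / t) / 2"
        unfolding \<Lambda>_def L_def W_def by (rule Lam_bound(2)[OF Dlp p1 p2 b1 b2 a2 bb2 tpos])
      have L0: "L \<ge> 0" unfolding L_def by (rule lp_norm_nonneg)
      have Le: "L < e" using Dn unfolding L_def H_def .
      have "L^2 \<le> e^2" using L0 Le by (intro power_mono) simp_all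
      then have "t * L^2 \<le> t * e^2" using tpos by (simp add: mult_left_mono)
      also have "t * e^2 = \<delta> / (2 * (W + 1))"
      proof -
        have gen: "q / \<delta> * (\<delta> / q)^2 = \<delta> / q" if "q > 0" for q
          using dpos that by (simp add: power2_eq_square field_simps)
        show ?thesis unfolding t_def e_def by (rule gen) (use W0 in simp)
      qed
      also have "\<dots> \<le> \<delta> / 2" by (rule divide_left_mono) (use dpos W0 in auto)
      finally have A1: "t * L^2 \<le> \<delta> / 2" .
      have "W / t = W * \<delta> / (2 * (W + 1))" unfolding t_def using dpos W0 by (simp add: field_simps)
      also have "\<dots> < \<delta> / 2" using dpos W0 by (simp add: field_simps)
      finally have A2: "W / t < \<delta> / 2" .
      have "\<delta> \<le> (t * L^2 + W / t) / 2" using bnd LD \<delta>_def by simp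
      moreover have gen: "\<And>X Y d::real. d \<le> (X+Y)/2 \<Longrightarrow> X \<le> d/2 \<Longrightarrow> Y < d/2 \<Longrightarrow> 0 < d \<Longrightarrow> False"
        by argo
      ultimately show False using A1 A2 dpos by blast
    qed
    then show ?thesis using Glp by blast
  qed
qed


theorem proposition3p7:
  fixes p :: real and F :: "int \<Rightarrow> 'a::banach"
  assumes "1 \<le> p" and "p \<le> 2"
    and "\<not> (\<exists>b::'a. UNIV \<subseteq> span {b})"
    and "F \<in> lp_space p"
  shows "closed_translate_span p F \<noteq> lp_space p"
proof -
  obtain x1 :: 'a where "x1 \<notin> span {0}" using assms(3) by blast
  then have x1: "x1 \<noteq> 0" using span_zero by blast
  obtain \<phi>1 where l1: "linear \<phi>1" and b1: "\<And>x. \<bar>\<phi>1 x\<bar> \<le> norm x" and e1: "\<phi>1 x1 = norm x1"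
    using hahn_banach_point[of x1] by blast
  have p1: "\<phi>1 x1 \<noteq> 0" using e1 x1 by simp
  obtain y :: 'a where y: "y \<notin> span {x1}" using assms(3) by blast
  define x2 where "x2 = y - (\<phi>1 y / \<phi>1 x1) *\<^sub>R x1"
  have p2: "\<phi>1 x2 = 0" unfolding x2_def using p1 by (simp add: linear_diff[OF l1] linear_scale[OF l1])
  have x2: "x2 \<noteq> 0"
  proof
    assume "x2 = 0"
    then have "y = (\<phi>1 y / \<phi>1 x1) *\<^sub>R x1" unfolding x2_def by simp
    moreover have "(\<phi>1 y / \<phi>1 x1) *\<^sub>R x1 \<in> span {x1}" by (intro span_scale span_base) simp
    ultimately show False using y by simp
  qed
  obtain \<phi>2 where l2: "linear \<phi>2" and b2: "\<And>x. \<bar>\<phi>2 x\<bar> \<le> norm x" and e2: "\<phi>2 x2 = norm x2"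
    using hahn_banach_point[of x2] by blast
  have p3: "\<phi>2 x2 \<noteq> 0" using e2 x2 by simp
  obtain G where "G \<in> lp_space p" "G \<notin> closed_translate_span p F"
    using main_core[OF assms(1,2,4) l1 l2 b1 b2 p1 p2 p3] by blast
  then show ?thesis by blast
qed

end
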